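(* For integers $a,t$ let $$f_{a,1,t}(X)=X^3+a^2(a^3-2)X^2-a(a^3-1)X+1+tX(aX-1)\in\mathbf{Z}[X].$$ There exists an integer $A\geq 1$ such that for all integers $t\geq 1$ and $a\geq A$, the polynomial $f_{a,1,t}(X)$ is irreducible over $\mathbf{Q}$. *)

theory Defs
  imports "HOL-Computational_Algebra.Polynomial_Factorial"
begin

definition f_poly :: "int \<Rightarrow> int \<Rightarrow> int poly" where
  "f_poly a t = [:1, 0, 0, 1:] + smult (a^2 * (a^3 - 2)) [:0, 0, 1:]
      - smult (a * (a^3 - 1)) [:0, 1:] + smult t ([:0, 1:] * [:-1, a:])"

end

theory Submission
  imports Defs
begin

lemma f_poly_eq:
  "f_poly a t = [:1, -(a*(a^3-1)+t), a^2*(a^3-2)+t*a, 1:]"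
  unfolding f_poly_def by (simp add: algebra_simps)

lemma map_eq:
  "map_poly (of_int :: int \<Rightarrow> rat) (f_poly a t) =
     [:1, of_int (-(a*(a^3-1)+t)), of_int (a^2*(a^3-2)+t*a), 1:]"
  unfolding f_poly_eq by (simp add: map_poly_pCons)

lemma rat_root:
  fixes b c :: int and x :: rat
  assumes "1 + of_int b * x + of_int c * x^2 + x^3 = 0"
  shows "x = 1 \<or> x = -1"
proof -
  obtain n d where q: "quotient_of x = (n, d)" by (cases "quotient_of x")
  have d0: "d > 0" using q quotient_of_denom_pos by blast
  have cop: "coprime n d" using q quotient_of_coprime by blast
  have xe: "x = of_int n / of_int d" using q quotient_of_div by blast
  have dx: "of_int d * x = of_int n" using d0 unfolding xe by simp
  have eq: "(of_int d)^3 * (1 + of_int b * x + of_int c * x^2 + x^3) =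
     (of_int d)^3 + of_int b * (of_int d)^2 * (of_int d * x) + of_int c * of_int d * (of_int d * x)^2 + (of_int d * x)^3"
    by (simp add: algebra_simps power2_eq_square power3_eq_cube)
  have z: "(of_int d)^3 * (1 + of_int b * x + of_int c * x^2 + x^3) = 0" using assms by simp
  have "(of_int d)^3 + of_int b * (of_int d)^2 * of_int n + of_int c * of_int d * (of_int n)^2 + (of_int n)^3 = (0::rat)"
    using eq z unfolding dx by simp
  hence "(of_int (d^3 + b*n*d^2 + c*n^2*d + n^3) :: rat) = 0"
    by (simp add: algebra_simps)
  hence E: "d^3 + b*n*d^2 + c*n^2*d + n^3 = 0" by linarith
  have "d dvd n^3"
  proof -
    have "n^3 = d * (-(d^2 + b*n*d + c*n^2))" using E by (simp add: algebra_simps power2_eq_square power3_eq_cube)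
    thus ?thesis by simp
  qed
  moreover have "coprime d (n^3)" using cop by (simp add: coprime_commute)
  ultimately have "d dvd 1" by (meson coprime_common_divisor dvd_refl)
  hence d1: "d = 1" using d0 by simp
  have "n dvd 1"
  proof -
    have "1 = n * (-(b + c*n + n^2))" using E d1 by (simp add: algebra_simps power2_eq_square power3_eq_cube)
    thus ?thesis by (metis dvd_triv_left)
  qed
  hence "n = 1 \<or> n = -1" by (simp add: zdvd1_eq abs_if split: if_splits)
  thus ?thesis using xe d1 by auto
qed

lemma irred_cubic:
  fixes b c :: int
  assumes "1 + b + c + 1 \<noteq> 0" "1 - b + c - 1 \<noteq> 0"
  shows "irreducible [:1, of_int b, of_int c, 1::rat:]"
proof (rule irreducibleI)
  let ?p = "[:1, of_int b, of_int c, 1::rat:]"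
  have deg: "degree ?p = 3" by simp
  show "?p \<noteq> 0" by simp
  show "\<not> ?p dvd 1" using deg by (auto simp: is_unit_poly_iff)
  have noroot: "poly ?p x \<noteq> 0" for x
  proof
    assume "poly ?p x = 0"
    hence "1 + of_int b * x + of_int c * x^2 + x^3 = 0"
      by (simp add: algebra_simps power2_eq_square power3_eq_cube)
    hence "x = 1 \<or> x = -1" by (rule rat_root)
    moreover have "poly ?p 1 = of_int (1+b+c+1)" "poly ?p (-1) = of_int (1-b+c-1)" by simp_all
    ultimately show False using assms \<open>poly ?p x = 0\<close> by (auto simp only: of_int_eq_0_iff)
  qed
  fix q r assume qr: "?p = q * r"
  have q0: "q \<noteq> 0" "r \<noteq> 0" using qr by auto
  have "degree q + degree r = 3" using qr q0 deg by (metis degree_mult_eq)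
  moreover have "degree q \<noteq> 1" "degree r \<noteq> 1"
  proof -
    have "\<not> (degree s = 1 \<and> s dvd ?p)" for s :: "rat poly"
    proof
      assume h: "degree s = 1 \<and> s dvd ?p"
      then obtain u v where s: "s = [:u, v:]" and v: "v \<noteq> 0"
        by (metis degree1_coeffs)
      have "poly s (-u/v) = 0" using s v by simp
      moreover obtain w where "?p = s * w" using h by blast
      ultimately have "poly ?p (-u/v) = 0" by simp
      thus False using noroot by blast
    qed
    thus "degree q \<noteq> 1" "degree r \<noteq> 1" using qr by (metis dvd_triv_left dvd_triv_right)+
  qed
  ultimately have "degree q = 0 \<or> degree r = 0" by linarith
  thus "q dvd 1 \<or> r dvd 1" using q0
    by (auto simp: is_unit_const_poly_iff dvd_field_iff elim!: degree_eq_zeroE)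
qed

theorem mainTheorem2:
  shows "\<exists>A::int. A \<ge> 1 \<and> (\<forall>t a. t \<ge> 1 \<longrightarrow> a \<ge> A \<longrightarrow>
           irreducible (map_poly (of_int :: int \<Rightarrow> rat) (f_poly a t)))"
proof (intro exI[of _ 2] conjI allI impI)
  fix t a :: int assume t: "t \<ge> 1" and a: "a \<ge> 2"
  show "irreducible (map_poly (of_int :: int \<Rightarrow> rat) (f_poly a t))"
    unfolding map_eq
  proof (rule irred_cubic)
    have a2: "a^2 \<ge> 4" using a mult_mono[of 2 a 2 a] by (simp add: power2_eq_square) 
    have a2': "a^2 \<ge> a" using a mult_left_mono[of 1 a a] by (simp add: power2_eq_square)
    have a4: "a^4 \<ge> 4 * a^2" using a2 mult_right_mono[of 4 "a*a" "a*a"] by (simp add: power4_eq_xxxx power2_eq_square mult.assoc)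
    have a5: "a^5 \<ge> 2 * a^4" using a by (simp add: power_Suc[of a 4, simplified] mult_right_mono)
    have ta: "t * a \<ge> t" using a t by (simp add: mult_left_mono[of 1 a t, simplified])
    have "a^2 * (a^3 - 2) = a^5 - 2*a^2" by (simp add: algebra_simps power_add[of a 2 3, simplified])
    moreover have "a * (a^3 - 1) = a^4 - a" by (simp add: algebra_simps power_Suc[of a 3, simplified])
    ultimately show "1 + - (a * (a ^ 3 - 1) + t) + (a\<^sup>2 * (a ^ 3 - 2) + t * a) + 1 \<noteq> 0"
      "1 - - (a * (a ^ 3 - 1) + t) + (a\<^sup>2 * (a ^ 3 - 2) + t * a) - 1 \<noteq> 0"
      using a2 a2' a4 a5 ta a t by linarith+
  qed
qed simp

end
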